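(* Let $\ell$, $x\le y$, $n=y-x$, $\lambda\in\mathbb{R}$ be such that $\inf_{t\in[0,1],\,x\le z\le y-1}\Xi_\ell(t,z)\ge\lambda$, and let $1\le i\le n$. Then the functions $$s\mapsto\frac{\int_{\Delta^{0,s}_{1,i-1}}\exp\big(\xi_{1,i-1}(\mathbf t_{1,i-1})\big)\,d\mathbf t_{1,i-1}}{\int_{\Delta^{0,s}_{1,i-1}}\exp\big(\lambda\sum_{j=1}^{i-1}t_j\big)\,d\mathbf t_{1,i-1}} \quad\text{and}\quad s\mapsto\frac{\int_{\Delta^{s,1}_{i+1,n}}\exp\big(\xi_{i+1,n}(\mathbf t_{i+1,n})\big)\,d\mathbf t_{i+1,n}}{\int_{\Delta^{s,1}_{i+1,n}}\exp\big(\lambda\sum_{j=i+1}^{n}t_j\big)\,d\mathbf t_{i+1,n}}$$ are non-decreasing in $s$ (on $(0,1)$, for those $i$ for which the respective integrals are over a nonempty set of variables).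
   Context: $\ell:[0,1]\times\mathbb{N}\to(0,\infty)$ is the jump intensity of a Markov counting process, with $t\mapsto\ell(t,z)$ continuously differentiable on $[0,1]$ for each $z$. The reciprocal characteristic is $\Xi_\ell(t,z)=\partial_t\log\ell(t,z)+\ell(t,z+1)-\ell(t,z)$. For $1\le j\le n$, $\xi_j:[0,1]\to\mathbb{R}$ is the primitive of $t\mapsto\Xi_\ell(t,x+j-1)$ with $\xi_j(0)=0$, and for $i\le k$, $\xi_{i,k}(\mathbf t_{i,k})=\sum_{j=i}^k\xi_j(t_j)$, where $\mathbf t_{i,k}=(t_i,\dots,t_k)$. For $0\le s\le r\le1$, $\Delta^{s,r}_{i,k}=\{(t_i,\dots,t_k):s<t_i<t_{i+1}<\dots<t_k<r\}$. *)

theory Defs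
  imports "HOL-Analysis.Analysis"
begin

definition Xi :: "(real \<Rightarrow> nat \<Rightarrow> real) \<Rightarrow> real \<Rightarrow> nat \<Rightarrow> real" where
  "Xi l t z = vector_derivative (\<lambda>s. ln (l s z)) (at t within {0..1})
              + l t (Suc z) - l t z"

definition xi :: "(real \<Rightarrow> nat \<Rightarrow> real) \<Rightarrow> nat \<Rightarrow> nat \<Rightarrow> real \<Rightarrow> real" where
  "xi l x j t = integral {0..t} (\<lambda>u. Xi l u (x + j - 1))"

definition xi_sum :: "(real \<Rightarrow> nat \<Rightarrow> real) \<Rightarrow> nat \<Rightarrow> nat \<Rightarrow> nat \<Rightarrow> (nat \<Rightarrow> real) \<Rightarrow> real" where
  "xi_sum l x i k t = (\<Sum>j=i..k. xi l x j (t j))"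

definition open_simplex :: "real \<Rightarrow> real \<Rightarrow> nat \<Rightarrow> nat \<Rightarrow> (nat \<Rightarrow> real) set" where
  "open_simplex s r i k = {t. (\<forall>j\<in>{i..k}. s < t j \<and> t j < r) \<and>
                         (\<forall>j. i \<le> j \<and> j < k \<longrightarrow> t j < t (Suc j))}"

abbreviation leb_on :: "nat \<Rightarrow> nat \<Rightarrow> (nat \<Rightarrow> real) measure" where
  "leb_on i k \<equiv> PiM {i..k} (\<lambda>_. lborel)"

end

theory Submission
  imports Defs
begin

lemma open_simplex_alt: "open_simplex s r i k = {t. (\<forall>j\<in>{i..k}. s < t j \<and> t j < r) \<and> (\<forall>j\<in>{i..<k}. t j < t (Suc j))}"
  unfolding open_simplex_def by auto

lemma comp_meas:
  assumes "h \<in> measurable M (PiM I (\<lambda>_. lborel))" "j \<in> I"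
  shows "(\<lambda>w. h w j) \<in> borel_measurable M"
  using measurable_compose[OF assms(1) measurable_component_singleton[OF assms(2)]] by simp

lemma meas_simplex[measurable]:
  assumes [measurable]: "f \<in> borel_measurable M" "g \<in> borel_measurable M" "h \<in> measurable M (PiM {a..b} (\<lambda>_. lborel))"
  shows "Measurable.pred M (\<lambda>x. h x \<in> open_simplex (f x) (g x) a b)"
proof -
  have [measurable]: "j \<in> {a..b} \<Longrightarrow> (\<lambda>w. h w j) \<in> borel_measurable M" for j
    by (rule comp_meas[OF assms(3)])
  have [measurable]: "j \<in> {a..<b} \<Longrightarrow> (\<lambda>w. h w j) \<in> borel_measurable M" for j
    by (rule comp_meas[OF assms(3)]) auto
  have [measurable]: "j \<in> {a..<b} \<Longrightarrow> (\<lambda>w. h w (Suc j)) \<in> borel_measurable M" for j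
    by (rule comp_meas[OF assms(3)]) auto
  show ?thesis
  unfolding open_simplex_alt mem_Collect_eq by measurable
qed

lemma meas_prod[measurable]:
  assumes [measurable]: "\<And>j. \<phi> j \<in> borel_measurable borel" "h \<in> measurable M (PiM {a..b} (\<lambda>_. lborel))"
  shows "(\<lambda>x. \<Prod>j\<in>{a..b}. \<phi> j (h x j) :: real) \<in> borel_measurable M"
proof -
  have [measurable]: "j \<in> {a..b} \<Longrightarrow> (\<lambda>w. h w j) \<in> borel_measurable M" for j
    by (rule comp_meas[OF assms(2)])
  show ?thesis by measurable
qed

definition Lo :: "(nat \<Rightarrow> real \<Rightarrow> real) \<Rightarrow> nat \<Rightarrow> real \<Rightarrow> ennreal" where
 "Lo \<phi> k s = (\<integral>\<^sup>+t. indicator (open_simplex 0 s 1 k) t * ennreal (\<Prod>j\<in>{1..k}. \<phi> j (t j)) \<partial>leb_on 1 k)"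

definition Up :: "(nat \<Rightarrow> real \<Rightarrow> real) \<Rightarrow> nat \<Rightarrow> nat \<Rightarrow> real \<Rightarrow> ennreal" where
 "Up \<phi> a b s = (\<integral>\<^sup>+t. indicator (open_simplex s 1 a b) t * ennreal (\<Prod>j\<in>{a..b}. \<phi> j (t j)) \<partial>leb_on a b)"

lemma chain_mono:
  assumes "\<forall>j\<in>{i..<k}. t j < (t (Suc j)::real)" "i \<le> j" "j \<le> m" "m \<le> k"
  shows "t j \<le> t m"
  using assms(3,4)
proof (induction m)
  case 0 then show ?case by simp
next
  case (Suc m)
  show ?case
  proof (cases "j = Suc m")
    case False
    then have "t j \<le> t m" using Suc by auto
    moreover have "t m < t (Suc m)" using assms(1,2) Suc.prems False by auto
    ultimately show ?thesis by simp
  qed simp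
qed

lemma Lo_mono: "s \<le> s' \<Longrightarrow> Lo \<phi> k s \<le> Lo \<phi> k s'"
  unfolding Lo_def
  by (intro nn_integral_mono mult_right_mono) (auto simp: indicator_def open_simplex_def)

lemma Up_antimono: "s \<le> s' \<Longrightarrow> Up \<phi> a b s' \<le> Up \<phi> a b s"
  unfolding Up_def
  by (intro nn_integral_mono mult_right_mono) (auto simp: indicator_def open_simplex_def)

lemma Lo_meas[measurable]:
  assumes [measurable]: "\<And>j. \<phi> j \<in> borel_measurable borel"
  shows "Lo \<phi> k \<in> borel_measurable borel"
proof -
  interpret finite_product_sigma_finite "\<lambda>_. lborel" "{1..k}" by standard auto
  show ?thesis unfolding Lo_def by measurable
qed

lemma Up_meas[measurable]:
  assumes [measurable]: "\<And>j. \<phi> j \<in> borel_measurable borel"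
  shows "Up \<phi> a b \<in> borel_measurable borel"
proof -
  interpret finite_product_sigma_finite "\<lambda>_. lborel" "{a..b}" by standard auto
  show ?thesis unfolding Up_def by measurable
qed

lemma Lo_0: "Lo \<phi> 0 s = 1"
  unfolding Lo_def open_simplex_alt by (simp add: PiM_empty)

lemma Up_empty: "b < a \<Longrightarrow> Up \<phi> a b s = 1"
  unfolding Up_def open_simplex_alt by (simp add: PiM_empty)

lemma Lo_Suc:
  assumes [measurable]: "\<And>j. \<phi> j \<in> borel_measurable borel" and pos: "\<And>j t. 0 \<le> \<phi> j t"
  shows "Lo \<phi> (Suc k) s = (\<integral>\<^sup>+y. indicator {0<..<s} y * (ennreal (\<phi> (Suc k) y) * Lo \<phi> k y) \<partial>lborel)"
proof -
  interpret product_sigma_finite "\<lambda>_. lborel" by standard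
  have ins: "{1..Suc k} = insert (Suc k) {1..k}" by auto
  have "Lo \<phi> (Suc k) s = (\<integral>\<^sup>+y. \<integral>\<^sup>+x. indicator (open_simplex 0 s 1 (Suc k)) (x(Suc k := y)) *
       ennreal (\<Prod>j\<in>{1..Suc k}. \<phi> j ((x(Suc k := y)) j)) \<partial>leb_on 1 k \<partial>lborel)"
  proof -
    have meas: "(\<lambda>t. indicator (open_simplex 0 s 1 (Suc k)) t * ennreal (\<Prod>j\<in>{1..Suc k}. \<phi> j (t j))) \<in> borel_measurable (leb_on 1 (Suc k))"
      by measurable
    show ?thesis unfolding Lo_def ins
      by (subst product_nn_integral_insert_rev[OF _ _ meas[unfolded ins]]) auto
  qed
  also have "\<dots> = (\<integral>\<^sup>+y. \<integral>\<^sup>+x. (indicator {0<..<s} y * ennreal (\<phi> (Suc k) y)) *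
       (indicator (open_simplex 0 y 1 k) x * ennreal (\<Prod>j\<in>{1..k}. \<phi> j (x j))) \<partial>leb_on 1 k \<partial>lborel)"
  proof (intro nn_integral_cong)
    fix y x
    have P: "(\<Prod>j\<in>{1..Suc k}. \<phi> j ((x(Suc k := y)) j)) = \<phi> (Suc k) y * (\<Prod>j\<in>{1..k}. \<phi> j (x j))"
      unfolding ins by (subst prod.insert) (auto intro!: prod.cong)
    have S: "x(Suc k := y) \<in> open_simplex 0 s 1 (Suc k) \<longleftrightarrow> (0 < y \<and> y < s) \<and> x \<in> open_simplex 0 y 1 k"
    proof
      assume A: "x(Suc k := y) \<in> open_simplex 0 s 1 (Suc k)"
      let ?t = "x(Suc k := y)"
      have ch: "\<forall>j\<in>{1..<Suc k}. ?t j < ?t (Suc j)" using A unfolding open_simplex_alt by auto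
      have y: "0 < y \<and> y < s" using A unfolding open_simplex_alt by (auto dest: bspec[of _ _ "Suc k"])
      have "x j < y" if "j \<in> {1..k}" for j
      proof -
        have "?t j \<le> ?t k" using chain_mono[OF ch, of j k] that by auto
        moreover have "k \<in> {1..<Suc k}" using that by auto
        then have "?t k < ?t (Suc k)" using ch by blast
        ultimately show ?thesis using that by auto
      qed
      moreover have "0 < x j" if "j \<in> {1..k}" for j
      proof -
        have "j \<in> {1..Suc k}" using that by auto
        then have "0 < ?t j" using A unfolding open_simplex_alt by blast
        then show ?thesis using that by auto
      qed
      moreover have "x j < x (Suc j)" if "j \<in> {1..<k}" for j
      proof -
        have "j \<in> {1..<Suc k}" using that by auto
        then have "?t j < ?t (Suc j)" using ch by blast
        then show ?thesis using that by auto
      qed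
      ultimately show "(0 < y \<and> y < s) \<and> x \<in> open_simplex 0 y 1 k"
        using y unfolding open_simplex_alt by auto
    next
      assume A: "(0 < y \<and> y < s) \<and> x \<in> open_simplex 0 y 1 k"
      let ?t = "x(Suc k := y)"
      have "0 < ?t j \<and> ?t j < s" if "j \<in> {1..Suc k}" for j
      proof (cases "j = Suc k")
        case False
        then have "j \<in> {1..k}" using that by auto
        then show ?thesis using A False unfolding open_simplex_alt by (auto dest: bspec[of _ _ j])
      qed (use A in auto)
      moreover have "?t j < ?t (Suc j)" if "j \<in> {1..<Suc k}" for j
      proof (cases "j = k")
        case True
        then have "j \<in> {1..k}" using that by auto
        then show ?thesis using A True unfolding open_simplex_alt by auto
      next
        case False
        then have "j \<in> {1..<k}" using that by auto
        then show ?thesis using A False unfolding open_simplex_alt by auto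
      qed
      ultimately show "x(Suc k := y) \<in> open_simplex 0 s 1 (Suc k)"
        unfolding open_simplex_alt by blast
    qed
    show "indicator (open_simplex 0 s 1 (Suc k)) (x(Suc k := y)) * ennreal (\<Prod>j\<in>{1..Suc k}. \<phi> j ((x(Suc k := y)) j)) =
         (indicator {0<..<s} y * ennreal (\<phi> (Suc k) y)) *
       (indicator (open_simplex 0 y 1 k) x * ennreal (\<Prod>j\<in>{1..k}. \<phi> j (x j)))"
      unfolding P indicator_def S using pos by (auto simp: ennreal_mult prod_nonneg)
  qed
  also have "\<dots> = (\<integral>\<^sup>+y. (indicator {0<..<s} y * ennreal (\<phi> (Suc k) y)) * Lo \<phi> k y \<partial>lborel)"
    unfolding Lo_def by (subst nn_integral_cmult) auto
  finally show ?thesis by (simp add: mult.assoc)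
qed


lemma Up_Suc:
  assumes [measurable]: "\<And>j. \<phi> j \<in> borel_measurable borel" and pos: "\<And>j t. 0 \<le> \<phi> j t"
    and ab: "a \<le> b"
  shows "Up \<phi> a b s = (\<integral>\<^sup>+y. indicator {s<..<1} y * (ennreal (\<phi> a y) * Up \<phi> (Suc a) b y) \<partial>lborel)"
proof -
  interpret product_sigma_finite "\<lambda>_. lborel" by standard
  have ins: "{a..b} = insert a {Suc a..b}" using ab by auto
  have "Up \<phi> a b s = (\<integral>\<^sup>+y. \<integral>\<^sup>+x. indicator (open_simplex s 1 a b) (x(a := y)) *
       ennreal (\<Prod>j\<in>{a..b}. \<phi> j ((x(a := y)) j)) \<partial>leb_on (Suc a) b \<partial>lborel)"
  proof -
    have meas: "(\<lambda>t. indicator (open_simplex s 1 a b) t * ennreal (\<Prod>j\<in>{a..b}. \<phi> j (t j))) \<in> borel_measurable (leb_on a b)"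
      by measurable
    show ?thesis unfolding Up_def ins
      by (subst product_nn_integral_insert_rev[OF _ _ meas[unfolded ins]]) auto
  qed
  also have "\<dots> = (\<integral>\<^sup>+y. \<integral>\<^sup>+x. (indicator {s<..<1} y * ennreal (\<phi> a y)) *
       (indicator (open_simplex y 1 (Suc a) b) x * ennreal (\<Prod>j\<in>{Suc a..b}. \<phi> j (x j))) \<partial>leb_on (Suc a) b \<partial>lborel)"
  proof (intro nn_integral_cong)
    fix y x
    have P: "(\<Prod>j\<in>{a..b}. \<phi> j ((x(a := y)) j)) = \<phi> a y * (\<Prod>j\<in>{Suc a..b}. \<phi> j (x j))"
      unfolding ins by (subst prod.insert) (auto intro!: prod.cong)
    have S: "x(a := y) \<in> open_simplex s 1 a b \<longleftrightarrow> (s < y \<and> y < 1) \<and> x \<in> open_simplex y 1 (Suc a) b"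
    proof
      assume A: "x(a := y) \<in> open_simplex s 1 a b"
      let ?t = "x(a := y)"
      have ch: "\<forall>j\<in>{a..<b}. ?t j < ?t (Suc j)" using A unfolding open_simplex_alt by auto
      have y: "s < y \<and> y < 1" using A ab unfolding open_simplex_alt by (auto dest: bspec[of _ _ a])
      have "y < x j" if "j \<in> {Suc a..b}" for j
      proof -
        have "?t (Suc a) \<le> ?t j" using chain_mono[OF ch, of "Suc a" j] that by auto
        moreover have "a \<in> {a..<b}" using that by auto
        then have "?t a < ?t (Suc a)" using ch by blast
        ultimately show ?thesis using that by auto
      qed
      moreover have "x j < 1" if "j \<in> {Suc a..b}" for j
      proof -
        have "j \<in> {a..b}" using that by auto
        then have "?t j < 1" using A unfolding open_simplex_alt by blast
        then show ?thesis using that by auto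
      qed
      moreover have "x j < x (Suc j)" if "j \<in> {Suc a..<b}" for j
      proof -
        have "j \<in> {a..<b}" using that by auto
        then have "?t j < ?t (Suc j)" using ch by blast
        then show ?thesis using that by auto
      qed
      ultimately show "(s < y \<and> y < 1) \<and> x \<in> open_simplex y 1 (Suc a) b"
        using y unfolding open_simplex_alt by auto
    next
      assume A: "(s < y \<and> y < 1) \<and> x \<in> open_simplex y 1 (Suc a) b"
      let ?t = "x(a := y)"
      have "s < ?t j \<and> ?t j < 1" if "j \<in> {a..b}" for j
      proof (cases "j = a")
        case False
        then have "j \<in> {Suc a..b}" using that by auto
        then show ?thesis using A False unfolding open_simplex_alt by (auto dest: bspec[of _ _ j])
      qed (use A in auto)
      moreover have "?t j < ?t (Suc j)" if "j \<in> {a..<b}" for j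
      proof (cases "j = a")
        case True
        then have "Suc j \<in> {Suc a..b}" using that by auto
        then show ?thesis using A True unfolding open_simplex_alt by auto
      next
        case False
        then have "j \<in> {Suc a..<b}" using that by auto
        then show ?thesis using A False unfolding open_simplex_alt by auto
      qed
      ultimately show "x(a := y) \<in> open_simplex s 1 a b"
        unfolding open_simplex_alt by blast
    qed
    show "indicator (open_simplex s 1 a b) (x(a := y)) * ennreal (\<Prod>j\<in>{a..b}. \<phi> j ((x(a := y)) j)) =
         (indicator {s<..<1} y * ennreal (\<phi> a y)) *
       (indicator (open_simplex y 1 (Suc a) b) x * ennreal (\<Prod>j\<in>{Suc a..b}. \<phi> j (x j)))"
      unfolding P indicator_def S using pos by (auto simp: ennreal_mult prod_nonneg)
  qed
  also have "\<dots> = (\<integral>\<^sup>+y. (indicator {s<..<1} y * ennreal (\<phi> a y)) * Up \<phi> (Suc a) b y \<partial>lborel)"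
    unfolding Up_def by (subst nn_integral_cmult) auto
  finally show ?thesis by (simp add: mult.assoc)
qed

lemma cross:
  fixes F G :: "real \<Rightarrow> ennreal"
  assumes [measurable]: "F \<in> borel_measurable borel" "G \<in> borel_measurable borel" "L \<in> sets borel" "R \<in> sets borel"
    and FG: "\<And>y y'. y \<in> L \<Longrightarrow> y' \<in> R \<Longrightarrow> F y * G y' \<le> F y' * G y"
  shows "(\<integral>\<^sup>+y. indicator L y * F y \<partial>lborel) * (\<integral>\<^sup>+y. indicator R y * G y \<partial>lborel)
       \<le> (\<integral>\<^sup>+y. indicator R y * F y \<partial>lborel) * (\<integral>\<^sup>+y. indicator L y * G y \<partial>lborel)"
proof -
  have "(\<integral>\<^sup>+y. indicator L y * F y \<partial>lborel) * (\<integral>\<^sup>+y. indicator R y * G y \<partial>lborel)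
     = (\<integral>\<^sup>+y'. (\<integral>\<^sup>+y. indicator L y * F y \<partial>lborel) * (indicator R y' * G y') \<partial>lborel)"
    by (subst nn_integral_cmult) auto
  also have "\<dots> = (\<integral>\<^sup>+y'. (\<integral>\<^sup>+y. indicator L y * F y * (indicator R y' * G y') \<partial>lborel) \<partial>lborel)"
    by (intro nn_integral_cong, subst nn_integral_multc) auto
  also have "\<dots> \<le> (\<integral>\<^sup>+y'. (\<integral>\<^sup>+y. indicator R y' * F y' * (indicator L y * G y) \<partial>lborel) \<partial>lborel)"
  proof (intro nn_integral_mono)
    fix y y'
    show "indicator L y * F y * (indicator R y' * G y') \<le> indicator R y' * F y' * (indicator L y * G y)"
      using FG[of y y'] by (auto simp: indicator_def mult_ac)
  qed
  also have "\<dots> = (\<integral>\<^sup>+y'. indicator R y' * F y' * (\<integral>\<^sup>+y. indicator L y * G y \<partial>lborel) \<partial>lborel)"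
    by (intro nn_integral_cong, subst nn_integral_cmult) auto
  also have "\<dots> = (\<integral>\<^sup>+y. indicator R y * F y \<partial>lborel) * (\<integral>\<^sup>+y. indicator L y * G y \<partial>lborel)"
    by (subst nn_integral_multc) auto
  finally show ?thesis .
qed


lemma ennreal_pq:
  assumes "0 \<le> a" "0 \<le> b" "0 \<le> c" "0 \<le> d" "a * b \<le> c * (d::real)"
  shows "ennreal a * ennreal b \<le> ennreal c * ennreal d"
  using assms by (simp add: ennreal_mult[symmetric] ennreal_leI)

lemma comb:
  fixes p1 p2 q1 q2 A1 A2 B1 B2 :: ennreal
  assumes "p1 * q2 \<le> p2 * q1" "A1 * B2 \<le> A2 * B1"
  shows "(p1 * A1) * (q2 * B2) \<le> (p2 * A2) * (q1 * B1)"
proof -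
  have "(p1 * A1) * (q2 * B2) = (p1 * q2) * (A1 * B2)" by (simp add: mult_ac)
  also have "\<dots> \<le> (p2 * q1) * (A2 * B1)" by (intro mult_mono assms) auto
  also have "\<dots> = (p2 * A2) * (q1 * B1)" by (simp add: mult_ac)
  finally show ?thesis .
qed

lemma final_alg:
  fixes Pa Pb Qa Qb :: ennreal
  assumes "Pa * Qb \<le> Pb * Qa"
  shows "Pa * (Qa + Qb) \<le> (Pa + Pb) * Qa"
proof -
  have "Pa * (Qa + Qb) = Pa * Qa + Pa * Qb" by (simp add: distrib_left)
  also have "\<dots> \<le> Pa * Qa + Pb * Qa" using assms by (intro add_left_mono)
  also have "\<dots> = (Pa + Pb) * Qa" by (simp add: distrib_right)
  finally show ?thesis .
qed

lemma final_alg2: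
  fixes Pa Pb Qa Qb :: ennreal
  assumes "Pb * Qa \<le> Pa * Qb"
  shows "(Pb + Pa) * Qa \<le> Pa * (Qb + Qa)"
proof -
  have "(Pb + Pa) * Qa = Pb * Qa + Pa * Qa" by (simp add: distrib_right)
  also have "\<dots> \<le> Pa * Qb + Pa * Qa" using assms by (intro add_right_mono)
  also have "\<dots> = Pa * (Qb + Qa)" by (simp add: distrib_left)
  finally show ?thesis .
qed

lemma Lo_cross:
  assumes [measurable]: "\<And>j. \<phi> j \<in> borel_measurable borel" "\<And>j. \<psi> j \<in> borel_measurable borel"
    and pos: "\<And>j t. 0 \<le> \<phi> j t" "\<And>j t. 0 \<le> \<psi> j t"
    and pq: "\<And>j y y'. 0 < y \<Longrightarrow> y \<le> y' \<Longrightarrow> y' < 1 \<Longrightarrow> \<phi> j y * \<psi> j y' \<le> \<phi> j y' * \<psi> j y"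
  shows "0 < s \<Longrightarrow> s \<le> s' \<Longrightarrow> s' < 1 \<Longrightarrow> Lo \<phi> k s * Lo \<psi> k s' \<le> Lo \<phi> k s' * Lo \<psi> k s"
proof (induction k arbitrary: s s')
  case 0
  then show ?case by (simp add: Lo_0)
next
  case (Suc k)
  define F where "F y = ennreal (\<phi> (Suc k) y) * Lo \<phi> k y" for y
  define G where "G y = ennreal (\<psi> (Suc k) y) * Lo \<psi> k y" for y
  have [measurable]: "F \<in> borel_measurable borel" "G \<in> borel_measurable borel"
    unfolding F_def[abs_def] G_def[abs_def] by measurable
  have LF: "Lo \<phi> (Suc k) r = (\<integral>\<^sup>+y. indicator {0<..<r} y * F y \<partial>lborel)" for r
    unfolding F_def by (rule Lo_Suc) (use pos in auto)
  have LG: "Lo \<psi> (Suc k) r = (\<integral>\<^sup>+y. indicator {0<..<r} y * G y \<partial>lborel)" for r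
    unfolding G_def by (rule Lo_Suc) (use pos in auto)
  have ind: "indicator {0<..<s'} y = (indicator {0<..<s} y + indicator {s..<s'} y :: ennreal)" for y
    using Suc.prems by (auto simp: indicator_def)
  have split: "(\<integral>\<^sup>+y. indicator {0<..<s'} y * H y \<partial>lborel) =
     (\<integral>\<^sup>+y. indicator {0<..<s} y * H y \<partial>lborel) + (\<integral>\<^sup>+y. indicator {s..<s'} y * H y \<partial>lborel)"
    if [measurable]: "H \<in> borel_measurable borel" for H
    unfolding ind distrib_right by (subst nn_integral_add) auto
  have cr: "(\<integral>\<^sup>+y. indicator {0<..<s} y * F y \<partial>lborel) * (\<integral>\<^sup>+y. indicator {s..<s'} y * G y \<partial>lborel)
       \<le> (\<integral>\<^sup>+y. indicator {s..<s'} y * F y \<partial>lborel) * (\<integral>\<^sup>+y. indicator {0<..<s} y * G y \<partial>lborel)"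
  proof (rule cross)
    fix y y' assume y: "y \<in> {0<..<s}" and y': "y' \<in> {s..<s'}"
    have "Lo \<phi> k y * Lo \<psi> k y' \<le> Lo \<phi> k y' * Lo \<psi> k y"
      using y y' Suc.prems by (intro Suc.IH) auto
    moreover have "ennreal (\<phi> (Suc k) y) * ennreal (\<psi> (Suc k) y') \<le> ennreal (\<phi> (Suc k) y') * ennreal (\<psi> (Suc k) y)"
      using y y' Suc.prems by (intro ennreal_pq pos pq) auto
    ultimately show "F y * G y' \<le> F y' * G y"
      unfolding F_def G_def by (intro comb)
  qed auto
  have sF: "(\<integral>\<^sup>+y. indicator {0<..<s'} y * F y \<partial>lborel) =
     (\<integral>\<^sup>+y. indicator {0<..<s} y * F y \<partial>lborel) + (\<integral>\<^sup>+y. indicator {s..<s'} y * F y \<partial>lborel)"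
    by (rule split) measurable
  have sG: "(\<integral>\<^sup>+y. indicator {0<..<s'} y * G y \<partial>lborel) =
     (\<integral>\<^sup>+y. indicator {0<..<s} y * G y \<partial>lborel) + (\<integral>\<^sup>+y. indicator {s..<s'} y * G y \<partial>lborel)"
    by (rule split) measurable
  show ?case
    unfolding LF LG sF sG using cr by (intro final_alg) auto
qed

lemma Up_cross:
  assumes [measurable]: "\<And>j. \<phi> j \<in> borel_measurable borel" "\<And>j. \<psi> j \<in> borel_measurable borel"
    and pos: "\<And>j t. 0 \<le> \<phi> j t" "\<And>j t. 0 \<le> \<psi> j t"
    and pq: "\<And>j y y'. 0 < y \<Longrightarrow> y \<le> y' \<Longrightarrow> y' < 1 \<Longrightarrow> \<phi> j y * \<psi> j y' \<le> \<phi> j y' * \<psi> j y"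
  shows "0 < s \<Longrightarrow> s \<le> s' \<Longrightarrow> s' < 1 \<Longrightarrow> Up \<phi> a b s * Up \<psi> a b s' \<le> Up \<phi> a b s' * Up \<psi> a b s"
proof (induction "Suc b - a" arbitrary: a s s')
  case 0
  then show ?case by (simp add: Up_empty)
next
  case (Suc d)
  show ?case
  proof (cases "a \<le> b")
    case False
    then show ?thesis by (simp add: Up_empty)
  next
    case ab: True
    define F where "F y = ennreal (\<phi> a y) * Up \<phi> (Suc a) b y" for y
    define G where "G y = ennreal (\<psi> a y) * Up \<psi> (Suc a) b y" for y
    have [measurable]: "F \<in> borel_measurable borel" "G \<in> borel_measurable borel"
      unfolding F_def[abs_def] G_def[abs_def] by measurable
    have LF: "Up \<phi> a b r = (\<integral>\<^sup>+y. indicator {r<..<1} y * F y \<partial>lborel)" for r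
      unfolding F_def by (rule Up_Suc) (use pos ab in auto)
    have LG: "Up \<psi> a b r = (\<integral>\<^sup>+y. indicator {r<..<1} y * G y \<partial>lborel)" for r
      unfolding G_def by (rule Up_Suc) (use pos ab in auto)
    have ind: "indicator {s<..<1} y = (indicator {s<..s'} y + indicator {s'<..<1} y :: ennreal)" for y
      using Suc.prems by (auto simp: indicator_def)
    have split: "(\<integral>\<^sup>+y. indicator {s<..<1} y * H y \<partial>lborel) =
       (\<integral>\<^sup>+y. indicator {s<..s'} y * H y \<partial>lborel) + (\<integral>\<^sup>+y. indicator {s'<..<1} y * H y \<partial>lborel)"
      if [measurable]: "H \<in> borel_measurable borel" for H
      unfolding ind distrib_right by (subst nn_integral_add) auto
    have sF: "(\<integral>\<^sup>+y. indicator {s<..<1} y * F y \<partial>lborel) =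
       (\<integral>\<^sup>+y. indicator {s<..s'} y * F y \<partial>lborel) + (\<integral>\<^sup>+y. indicator {s'<..<1} y * F y \<partial>lborel)"
      by (rule split) measurable
    have sG: "(\<integral>\<^sup>+y. indicator {s<..<1} y * G y \<partial>lborel) =
       (\<integral>\<^sup>+y. indicator {s<..s'} y * G y \<partial>lborel) + (\<integral>\<^sup>+y. indicator {s'<..<1} y * G y \<partial>lborel)"
      by (rule split) measurable
    have cr: "(\<integral>\<^sup>+y. indicator {s<..s'} y * F y \<partial>lborel) * (\<integral>\<^sup>+y. indicator {s'<..<1} y * G y \<partial>lborel)
         \<le> (\<integral>\<^sup>+y. indicator {s'<..<1} y * F y \<partial>lborel) * (\<integral>\<^sup>+y. indicator {s<..s'} y * G y \<partial>lborel)"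
    proof (rule cross)
      fix y y' assume y: "y \<in> {s<..s'}" and y': "y' \<in> {s'<..<1}"
      have "Up \<phi> (Suc a) b y * Up \<psi> (Suc a) b y' \<le> Up \<phi> (Suc a) b y' * Up \<psi> (Suc a) b y"
        using y y' Suc.prems Suc.hyps by (intro Suc.hyps(1)) auto
      moreover have "ennreal (\<phi> a y) * ennreal (\<psi> a y') \<le> ennreal (\<phi> a y') * ennreal (\<psi> a y)"
        using y y' Suc.prems by (intro ennreal_pq pos pq) auto
      ultimately show "F y * G y' \<le> F y' * G y"
        unfolding F_def G_def by (intro comb)
    qed auto
    have "Up \<phi> a b s * Up \<psi> a b s' \<le> Up \<phi> a b s' * Up \<psi> a b s"
      unfolding LF LG sF sG using cr by (intro final_alg2) auto
    then show ?thesis .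
  qed
qed


lemma ind_c: "A \<in> sets M \<Longrightarrow> (\<integral>\<^sup>+y. indicator A y * c \<partial>M) = c * emeasure M A"
  by (metis (no_types, lifting) mult.commute nn_integral_cmult_indicator nn_integral_cong)

lemma Lo_fin:
  assumes [measurable]: "\<And>j. \<phi> j \<in> borel_measurable borel" and pos: "\<And>j t. 0 \<le> \<phi> j t"
    and bnd: "\<And>j. \<exists>M. \<forall>y\<in>{0<..<1}. \<phi> j y \<le> M"
  shows "Lo \<phi> k 1 < \<infinity>"
proof (induction k)
  case 0 then show ?case by (simp add: Lo_0)
next
  case (Suc k)
  obtain M where M: "\<forall>y\<in>{0<..<1}. \<phi> (Suc k) y \<le> M" using bnd by blast
  have "Lo \<phi> (Suc k) 1 = (\<integral>\<^sup>+y. indicator {0<..<1} y * (ennreal (\<phi> (Suc k) y) * Lo \<phi> k y) \<partial>lborel)"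
    by (rule Lo_Suc) (use pos in auto)
  also have "\<dots> \<le> (\<integral>\<^sup>+y. indicator {0<..<1::real} y * (ennreal M * Lo \<phi> k 1) \<partial>lborel)"
  proof (intro nn_integral_mono)
    fix y
    show "indicator {0<..<1} y * (ennreal (\<phi> (Suc k) y) * Lo \<phi> k y) \<le> indicator {0<..<1} y * (ennreal M * Lo \<phi> k 1)"
    proof (cases "y \<in> {0<..<1}")
      case True
      then have "ennreal (\<phi> (Suc k) y) * Lo \<phi> k y \<le> ennreal M * Lo \<phi> k 1"
        using M by (intro mult_mono ennreal_leI Lo_mono) auto
      then show ?thesis using True by simp
    qed simp
  qed
  also have "\<dots> = ennreal M * Lo \<phi> k 1" by (subst ind_c) auto
  also have "\<dots> < \<infinity>" using Suc by (simp add: ennreal_mult_less_top)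
  finally show ?case .
qed

lemma Lo_pos:
  assumes [measurable]: "\<And>j. \<phi> j \<in> borel_measurable borel" and pos: "\<And>j t. 0 \<le> \<phi> j t"
    and bnd: "\<And>j. \<exists>m>0. \<forall>y\<in>{0<..<1}. m \<le> \<phi> j y"
  shows "0 < s \<Longrightarrow> s \<le> 1 \<Longrightarrow> 0 < Lo \<phi> k s"
proof (induction k arbitrary: s)
  case 0 then show ?case by (simp add: Lo_0)
next
  case (Suc k)
  obtain m where m: "m > 0" "\<forall>y\<in>{0<..<1}. m \<le> \<phi> (Suc k) y" using bnd by blast
  have "0 < ennreal m * Lo \<phi> k (s/2) * ennreal (s - s/2)"
    using m Suc by (simp add: ennreal_zero_less_mult_iff)
  also have "\<dots> = (\<integral>\<^sup>+y. indicator {s/2<..<s::real} y * (ennreal m * Lo \<phi> k (s/2)) \<partial>lborel)"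
    using Suc.prems by (subst ind_c) auto
  also have "\<dots> \<le> (\<integral>\<^sup>+y. indicator {0<..<s} y * (ennreal (\<phi> (Suc k) y) * Lo \<phi> k y) \<partial>lborel)"
  proof (intro nn_integral_mono)
    fix y
    show "indicator {s/2<..<s} y * (ennreal m * Lo \<phi> k (s/2)) \<le> indicator {0<..<s} y * (ennreal (\<phi> (Suc k) y) * Lo \<phi> k y)"
    proof (cases "y \<in> {s/2<..<s}")
      case True
      then have "ennreal m * Lo \<phi> k (s/2) \<le> ennreal (\<phi> (Suc k) y) * Lo \<phi> k y"
        using m Suc.prems by (intro mult_mono ennreal_leI Lo_mono) auto
      then show ?thesis using True Suc.prems by (simp add: indicator_def)
    qed simp
  qed
  also have "\<dots> = Lo \<phi> (Suc k) s"
    by (rule Lo_Suc[symmetric]) (use pos in auto)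
  finally show ?case .
qed

lemma Up_fin:
  assumes [measurable]: "\<And>j. \<phi> j \<in> borel_measurable borel" and pos: "\<And>j t. 0 \<le> \<phi> j t"
    and bnd: "\<And>j. \<exists>M. \<forall>y\<in>{0<..<1}. \<phi> j y \<le> M"
  shows "Up \<phi> a b 0 < \<infinity>"
proof (induction "Suc b - a" arbitrary: a)
  case 0 then show ?case by (simp add: Up_empty)
next
  case (Suc d)
  show ?case
  proof (cases "a \<le> b")
    case False then show ?thesis by (simp add: Up_empty)
  next
    case ab: True
    obtain M where M: "\<forall>y\<in>{0<..<1}. \<phi> a y \<le> M" using bnd by blast
    have IH: "Up \<phi> (Suc a) b 0 < \<infinity>" using Suc by auto
    have "Up \<phi> a b 0 = (\<integral>\<^sup>+y. indicator {0<..<1} y * (ennreal (\<phi> a y) * Up \<phi> (Suc a) b y) \<partial>lborel)"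
      by (rule Up_Suc) (use pos ab in auto)
    also have "\<dots> \<le> (\<integral>\<^sup>+y. indicator {0<..<1::real} y * (ennreal M * Up \<phi> (Suc a) b 0) \<partial>lborel)"
    proof (intro nn_integral_mono)
      fix y
      show "indicator {0<..<1} y * (ennreal (\<phi> a y) * Up \<phi> (Suc a) b y) \<le> indicator {0<..<1} y * (ennreal M * Up \<phi> (Suc a) b 0)"
      proof (cases "y \<in> {0<..<1}")
        case True
        then have "ennreal (\<phi> a y) * Up \<phi> (Suc a) b y \<le> ennreal M * Up \<phi> (Suc a) b 0"
          using M by (intro mult_mono ennreal_leI Up_antimono) auto
        then show ?thesis using True by simp
      qed simp
    qed
    also have "\<dots> = ennreal M * Up \<phi> (Suc a) b 0" by (subst ind_c) auto
    also have "\<dots> < \<infinity>" using IH by (simp add: ennreal_mult_less_top)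
    finally show ?thesis .
  qed
qed

lemma Up_pos:
  assumes [measurable]: "\<And>j. \<phi> j \<in> borel_measurable borel" and pos: "\<And>j t. 0 \<le> \<phi> j t"
    and bnd: "\<And>j. \<exists>m>0. \<forall>y\<in>{0<..<1}. m \<le> \<phi> j y"
  shows "0 \<le> s \<Longrightarrow> s < 1 \<Longrightarrow> 0 < Up \<phi> a b s"
proof (induction "Suc b - a" arbitrary: a s)
  case 0 then show ?case by (simp add: Up_empty)
next
  case (Suc d)
  show ?case
  proof (cases "a \<le> b")
    case False then show ?thesis by (simp add: Up_empty)
  next
    case ab: True
    define c where "c = (s + 1) / 2"
    have c: "s < c" "c < 1" "0 \<le> c" using Suc.prems by (auto simp: c_def)
    obtain m where m: "m > 0" "\<forall>y\<in>{0<..<1}. m \<le> \<phi> a y" using bnd by blast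
    have IH: "0 < Up \<phi> (Suc a) b c" using Suc c by auto
    have "0 < ennreal m * Up \<phi> (Suc a) b c * ennreal (c - s)"
      using m IH c by (simp add: ennreal_zero_less_mult_iff)
    also have "\<dots> = (\<integral>\<^sup>+y. indicator {s<..<c::real} y * (ennreal m * Up \<phi> (Suc a) b c) \<partial>lborel)"
      using c by (subst ind_c) auto
    also have "\<dots> \<le> (\<integral>\<^sup>+y. indicator {s<..<1} y * (ennreal (\<phi> a y) * Up \<phi> (Suc a) b y) \<partial>lborel)"
    proof (intro nn_integral_mono)
      fix y
      show "indicator {s<..<c} y * (ennreal m * Up \<phi> (Suc a) b c) \<le> indicator {s<..<1} y * (ennreal (\<phi> a y) * Up \<phi> (Suc a) b y)"
      proof (cases "y \<in> {s<..<c}")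
        case True
        then have "ennreal m * Up \<phi> (Suc a) b c \<le> ennreal (\<phi> a y) * Up \<phi> (Suc a) b y"
          using m c Suc.prems by (intro mult_mono ennreal_leI Up_antimono) auto
        then show ?thesis using True c by (simp add: indicator_def)
      qed simp
    qed
    also have "\<dots> = Up \<phi> a b s"
      by (rule Up_Suc[symmetric]) (use pos ab in auto)
    finally show ?thesis .
  qed
qed


lemma Xi_cont:
  fixes l :: "real \<Rightarrow> nat \<Rightarrow> real"
  assumes pos: "\<And>t z. 0 < l t z"
    and diff: "\<And>t z. t \<in> {0..1} \<Longrightarrow> (\<lambda>s. l s z) differentiable (at t within {0..1})"
    and cont_deriv: "\<And>z. continuous_on {0..1}
                          (\<lambda>t. vector_derivative (\<lambda>s. l s z) (at t within {0..1}))"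
  shows "continuous_on {0..1} (\<lambda>t. Xi l t z)"
proof -
  define D where "D t = vector_derivative (\<lambda>s. l s z) (at t within {0..1})" for t
  have lc: "continuous_on {0..1} (\<lambda>t. l t w)" for w
    using diff by (auto simp: continuous_on_eq_continuous_within intro: differentiable_imp_continuous_within)
  have eq: "Xi l t z = D t / l t z + l t (Suc z) - l t z" if t: "t \<in> {0..1}" for t
  proof -
    have "((\<lambda>s. l s z) has_vector_derivative D t) (at t within {0..1})"
      unfolding D_def using diff[OF t] vector_derivative_works by blast
    then have d: "((\<lambda>s. l s z) has_real_derivative D t) (at t within {0..1})"
      by (simp add: has_real_derivative_iff_has_vector_derivative)
    have "((\<lambda>s. ln (l s z)) has_real_derivative (inverse (l t z) * D t)) (at t within {0..1})"
      by (rule DERIV_chain2[OF DERIV_ln[OF pos] d])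
    then have "((\<lambda>s. ln (l s z)) has_vector_derivative (D t / l t z)) (at t within {0..1})"
      by (simp add: has_real_derivative_iff_has_vector_derivative divide_inverse mult.commute)
    then have "vector_derivative (\<lambda>s. ln (l s z)) (at t within {0..1}) = D t / l t z"
      using vector_derivative_within_closed_interval[of 0 1 t] t by (simp add: cbox_interval)
    then show ?thesis unfolding Xi_def by simp
  qed
  have "continuous_on {0..1} (\<lambda>t. D t / l t z + l t (Suc z) - l t z)"
    using cont_deriv[of z] lc pos unfolding D_def[abs_def]
    by (intro continuous_intros) (auto simp: less_imp_neq[symmetric])
  then show ?thesis by (rule continuous_on_eq) (simp add: eq)
qed

lemma xi_props:
  fixes l :: "real \<Rightarrow> nat \<Rightarrow> real"
  assumes cont: "continuous_on {0..1} (\<lambda>t. Xi l t (x + j - 1))"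
    and bnd: "\<And>t. t \<in> {0..1} \<Longrightarrow> lam \<le> Xi l t (x + j - 1)"
  shows "continuous_on {0..1} (xi l x j)"
    and "0 \<le> y \<Longrightarrow> y \<le> y' \<Longrightarrow> y' \<le> 1 \<Longrightarrow> lam * (y' - y) \<le> xi l x j y' - xi l x j y"
proof -
  have int: "(\<lambda>t. Xi l t (x + j - 1)) integrable_on {0..1}"
    using cont by (rule integrable_continuous_real)
  show "continuous_on {0..1} (xi l x j)"
    unfolding xi_def[abs_def] using indefinite_integral_continuous_1[OF int] by simp
  assume y: "0 \<le> y" "y \<le> y'" "y' \<le> 1"
  have int': "(\<lambda>t. Xi l t (x + j - 1)) integrable_on {0..y'}"
    by (rule integrable_on_subinterval[OF int]) (use y in auto)
  have int'': "(\<lambda>t. Xi l t (x + j - 1)) integrable_on {y..y'}"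
    by (rule integrable_on_subinterval[OF int]) (use y in auto)
  have "xi l x j y + integral {y..y'} (\<lambda>t. Xi l t (x + j - 1)) = xi l x j y'"
    unfolding xi_def using Henstock_Kurzweil_Integration.integral_combine[OF y(1,2) int'] .
  moreover have "integral {y..y'} (\<lambda>t. lam) \<le> integral {y..y'} (\<lambda>t. Xi l t (x + j - 1))"
    using y by (intro integral_le int'' bnd) auto
  moreover have "integral {y..y'} (\<lambda>t. lam) = lam * (y' - y)" using y by simp
  ultimately show "lam * (y' - y) \<le> xi l x j y' - xi l x j y" by linarith
qed

lemma LINT_simplex:
  assumes [measurable]: "\<And>j. \<phi> j \<in> borel_measurable borel" and pos: "\<And>j t. 0 \<le> \<phi> j t"
    and eq: "\<And>t. t \<in> open_simplex r q a b \<Longrightarrow> f t = (\<Prod>j\<in>{a..b}. \<phi> j (t j))"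
  shows "(LINT t : open_simplex r q a b | leb_on a b. f t) =
    enn2real (\<integral>\<^sup>+t. indicator (open_simplex r q a b) t * ennreal (\<Prod>j\<in>{a..b}. \<phi> j (t j)) \<partial>leb_on a b)"
proof -
  have "(\<lambda>t. indicator (open_simplex r q a b) t *\<^sub>R f t) = (\<lambda>t. indicator (open_simplex r q a b) t * (\<Prod>j\<in>{a..b}. \<phi> j (t j)))"
    using eq by (auto simp: indicator_def)
  then have "(LINT t : open_simplex r q a b | leb_on a b. f t) = integral\<^sup>L (leb_on a b) (\<lambda>t. indicator (open_simplex r q a b) t * (\<Prod>j\<in>{a..b}. \<phi> j (t j)))"
    unfolding set_lebesgue_integral_def by simp
  also have "\<dots> = enn2real (\<integral>\<^sup>+t. ennreal (indicator (open_simplex r q a b) t * (\<Prod>j\<in>{a..b}. \<phi> j (t j))) \<partial>leb_on a b)"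
  proof (rule integral_eq_nn_integral)
    show "(\<lambda>t. indicator (open_simplex r q a b) t * (\<Prod>j\<in>{a..b}. \<phi> j (t j))) \<in> borel_measurable (leb_on a b)"
      by measurable
    show "AE t in leb_on a b. 0 \<le> indicator (open_simplex r q a b) t * (\<Prod>j\<in>{a..b}. \<phi> j (t j))"
      by (intro AE_I2 mult_nonneg_nonneg prod_nonneg) (auto intro: pos)
  qed
  also have "\<dots> = enn2real (\<integral>\<^sup>+t. indicator (open_simplex r q a b) t * ennreal (\<Prod>j\<in>{a..b}. \<phi> j (t j)) \<partial>leb_on a b)"
    by (intro arg_cong[where f=enn2real] nn_integral_cong) (auto simp: indicator_def)
  finally show ?thesis .
qed

lemma ratio:
  fixes Fs Fs' Gs Gs' :: ennreal
  assumes "Fs * Gs' \<le> Fs' * Gs" "Fs' < \<infinity>" "Gs < \<infinity>" "Gs' < \<infinity>" "0 < Gs" "0 < Gs'"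
  shows "enn2real Fs / enn2real Gs \<le> enn2real Fs' / enn2real Gs'"
proof -
  have "enn2real (Fs * Gs') \<le> enn2real (Fs' * Gs)"
    using assms by (intro enn2real_mono) (auto simp: ennreal_mult_less_top)
  then have *: "enn2real Fs * enn2real Gs' \<le> enn2real Fs' * enn2real Gs" by (simp add: enn2real_mult)
  have "0 < enn2real Gs" "0 < enn2real Gs'" using assms by (auto simp: enn2real_positive_iff)
  then show ?thesis using * by (simp add: divide_simps mult.commute)
qed


theorem lemma3p4:
  fixes l :: "real \<Rightarrow> nat \<Rightarrow> real" and x y n i :: nat and lam :: real
  assumes pos: "\<And>t z. 0 < l t z"
    and diff: "\<And>t z. t \<in> {0..1} \<Longrightarrow> (\<lambda>s. l s z) differentiable (at t within {0..1})"
    and cont_deriv: "\<And>z. continuous_on {0..1}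
                          (\<lambda>t. vector_derivative (\<lambda>s. l s z) (at t within {0..1}))"
    and xy: "x \<le> y"
    and n_def: "n = y - x"
    and bound: "\<And>t z. t \<in> {0..1} \<Longrightarrow> x \<le> z \<Longrightarrow> z < y \<Longrightarrow> lam \<le> Xi l t z"
    and i: "1 \<le> i" "i \<le> n"
  shows "mono_on {0<..<1} (\<lambda>s.
            (LINT t : open_simplex 0 s 1 (i - 1) | leb_on 1 (i - 1). exp (xi_sum l x 1 (i - 1) t))
          / (LINT t : open_simplex 0 s 1 (i - 1) | leb_on 1 (i - 1). exp (lam * (\<Sum>j=1..i - 1. t j))))
        \<and> mono_on {0<..<1} (\<lambda>s.
            (LINT t : open_simplex s 1 (i + 1) n | leb_on (i + 1) n. exp (xi_sum l x (i + 1) n t))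
          / (LINT t : open_simplex s 1 (i + 1) n | leb_on (i + 1) n. exp (lam * (\<Sum>j=i + 1..n. t j))))"
proof -
  define c where "c t = max 0 (min 1 t)" for t :: real
  have Xc: "continuous_on {0..1} (\<lambda>t. Xi l t z)" for z
    by (rule Xi_cont[OF pos diff cont_deriv])
  have jb: "x \<le> x + j - 1 \<and> x + j - 1 < y" if "j \<in> {1..n}" for j
    using that n_def xy by auto
  have xic: "continuous_on {0..1} (xi l x j)" if "j \<in> {1..n}" for j
    by (rule xi_props(1)[OF Xc, where lam=lam]) (use jb[OF that] bound in auto)
  have xim: "lam * (v - u) \<le> xi l x j v - xi l x j u"
    if "j \<in> {1..n}" "0 \<le> u" "u \<le> v" "v \<le> 1" for j u v
    by (rule xi_props(2)[OF Xc, where lam=lam]) (use jb[OF that(1)] bound that in auto)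
  define \<phi> where "\<phi> j t = (if j \<in> {1..n} then exp (xi l x j (c t)) else exp (lam * t))" for j t
  define \<psi> where "\<psi> j t = exp (lam * t)" for j :: nat and t :: real
  have cc: "continuous_on UNIV c" unfolding c_def[abs_def] by (intro continuous_intros)
  have cim: "c ` UNIV \<subseteq> {0..1}" by (auto simp: c_def)
  have \<phi>c: "continuous_on UNIV (\<phi> j)" for j
  proof (cases "j \<in> {1..n}")
    case True
    have "continuous_on UNIV (\<lambda>t. xi l x j (c t))"
      by (rule continuous_on_compose2[OF xic[OF True] cc cim])
    then show ?thesis unfolding \<phi>_def[abs_def] using True by (auto intro: continuous_intros)
  next
    case False
    then show ?thesis unfolding \<phi>_def[abs_def] by (auto intro!: continuous_intros)
  qed
  have \<psi>c: "continuous_on UNIV (\<psi> j)" for j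
    unfolding \<psi>_def[abs_def] by (intro continuous_intros)
  have meas[measurable]: "\<phi> j \<in> borel_measurable borel" "\<psi> j \<in> borel_measurable borel" for j
    using \<phi>c \<psi>c by (auto intro: borel_measurable_continuous_onI)
  have \<phi>p: "0 \<le> \<phi> j t" "0 \<le> \<psi> j t" for j t by (auto simp: \<phi>_def \<psi>_def)
  have \<phi>b: "\<exists>M. \<forall>u\<in>{0<..<1}. \<phi> j u \<le> M" "\<exists>M. \<forall>u\<in>{0<..<1}. \<psi> j u \<le> M" for j
  proof -
    obtain t0 where "\<forall>u\<in>{0..1}. \<phi> j u \<le> \<phi> j t0"
      using continuous_attains_sup[of "{0..1::real}" "\<phi> j"] continuous_on_subset[OF \<phi>c] by auto
    then show "\<exists>M. \<forall>u\<in>{0<..<1}. \<phi> j u \<le> M" by (intro exI[of _ "\<phi> j t0"]) auto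
    obtain t1 where "\<forall>u\<in>{0..1}. \<psi> j u \<le> \<psi> j t1"
      using continuous_attains_sup[of "{0..1::real}" "\<psi> j"] continuous_on_subset[OF \<psi>c] by auto
    then show "\<exists>M. \<forall>u\<in>{0<..<1}. \<psi> j u \<le> M" by (intro exI[of _ "\<psi> j t1"]) auto
  qed
  have \<psi>m: "\<exists>m>0. \<forall>u\<in>{0<..<1}. m \<le> \<psi> j u" for j
  proof -
    obtain t0 where "\<forall>u\<in>{0..1}. \<psi> j t0 \<le> \<psi> j u"
      using continuous_attains_inf[of "{0..1::real}" "\<psi> j"] continuous_on_subset[OF \<psi>c] by auto
    moreover have "0 < \<psi> j t0" by (simp add: \<psi>_def)
    ultimately show ?thesis by (intro exI[of _ "\<psi> j t0"]) auto
  qed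
  have pq: "\<phi> j u * \<psi> j v \<le> \<phi> j v * \<psi> j u" if "0 < u" "u \<le> v" "v < 1" for j u v
  proof (cases "j \<in> {1..n}")
    case True
    have cu: "c u = u" "c v = v" using that by (auto simp: c_def)
    have "xi l x j u + lam * v \<le> xi l x j v + lam * u"
      using xim[OF True, of u v] that by (simp add: algebra_simps)
    then show ?thesis unfolding \<phi>_def \<psi>_def if_P[OF True]
      by (simp add: cu exp_add[symmetric])
  next
    case False
    then show ?thesis unfolding \<phi>_def \<psi>_def if_not_P[OF False] by (simp add: mult.commute)
  qed
  have eqL1: "exp (xi_sum l x 1 (i - 1) t) = (\<Prod>j\<in>{1..i-1}. \<phi> j (t j))"
    if "t \<in> open_simplex 0 s 1 (i - 1)" "s \<le> 1" for t s
  proof -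
    have "exp (xi_sum l x 1 (i - 1) t) = (\<Prod>j\<in>{1..i-1}. exp (xi l x j (t j)))"
      unfolding xi_sum_def by (simp add: exp_sum)
    also have "\<dots> = (\<Prod>j\<in>{1..i-1}. \<phi> j (t j))"
    proof (intro prod.cong refl)
      fix j assume j: "j \<in> {1..i-1}"
      then have "0 < t j" "t j < s" using that unfolding open_simplex_def by auto
      then have "0 < t j" "t j < 1" using that by auto
      moreover have "j \<in> {1..n}" using j i by auto
      ultimately show "exp (xi l x j (t j)) = \<phi> j (t j)" by (simp add: \<phi>_def c_def)
    qed
    finally show ?thesis .
  qed
  have eqU1: "exp (xi_sum l x (i + 1) n t) = (\<Prod>j\<in>{i+1..n}. \<phi> j (t j))"
    if "t \<in> open_simplex s 1 (i + 1) n" "0 \<le> s" for t s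
  proof -
    have "exp (xi_sum l x (i + 1) n t) = (\<Prod>j\<in>{i+1..n}. exp (xi l x j (t j)))"
      unfolding xi_sum_def by (simp add: exp_sum)
    also have "\<dots> = (\<Prod>j\<in>{i+1..n}. \<phi> j (t j))"
    proof (intro prod.cong refl)
      fix j assume j: "j \<in> {i+1..n}"
      then have "s < t j" "t j < 1" using that unfolding open_simplex_def by auto
      then have "0 < t j" "t j < 1" using that by auto
      moreover have "j \<in> {1..n}" using j i by auto
      ultimately show "exp (xi l x j (t j)) = \<phi> j (t j)" by (simp add: \<phi>_def c_def)
    qed
    finally show ?thesis .
  qed
  have eqG: "exp (lam * (\<Sum>j=a..b. t j)) = (\<Prod>j\<in>{a..b}. \<psi> j (t j))" for a b and t :: "nat \<Rightarrow> real"
    by (simp add: \<psi>_def sum_distrib_left exp_sum)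
  have L1: "(LINT t : open_simplex 0 s 1 (i - 1) | leb_on 1 (i - 1). exp (xi_sum l x 1 (i - 1) t)) = enn2real (Lo \<phi> (i - 1) s)"
    if "s \<le> 1" for s
    unfolding Lo_def by (rule LINT_simplex) (use \<phi>p eqL1 that in auto)
  have L2: "(LINT t : open_simplex 0 s 1 (i - 1) | leb_on 1 (i - 1). exp (lam * (\<Sum>j=1..i - 1. t j))) = enn2real (Lo \<psi> (i - 1) s)" for s
    unfolding Lo_def by (rule LINT_simplex) (use \<phi>p eqG in auto)
  have U1: "(LINT t : open_simplex s 1 (i + 1) n | leb_on (i + 1) n. exp (xi_sum l x (i + 1) n t)) = enn2real (Up \<phi> (i + 1) n s)"
    if "0 \<le> s" for s
    unfolding Up_def by (rule LINT_simplex) (use \<phi>p eqU1 that in auto)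
  have U2: "(LINT t : open_simplex s 1 (i + 1) n | leb_on (i + 1) n. exp (lam * (\<Sum>j=i + 1..n. t j))) = enn2real (Up \<psi> (i + 1) n s)" for s
    unfolding Up_def by (rule LINT_simplex) (use \<phi>p eqG in auto)
  have m1: "mono_on {0<..<1} (\<lambda>s.
            (LINT t : open_simplex 0 s 1 (i - 1) | leb_on 1 (i - 1). exp (xi_sum l x 1 (i - 1) t))
          / (LINT t : open_simplex 0 s 1 (i - 1) | leb_on 1 (i - 1). exp (lam * (\<Sum>j=1..i - 1. t j))))"
  proof (rule mono_onI)
    fix s s' :: real assume s: "s \<in> {0<..<1}" "s' \<in> {0<..<1}" "s \<le> s'"
    have "Lo \<phi> (i - 1) s' < \<infinity>"
      using s by (intro le_less_trans[OF Lo_mono Lo_fin[of \<phi>, OF meas(1) \<phi>p(1) \<phi>b(1)]]) auto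
    moreover have "Lo \<psi> (i - 1) r < \<infinity>" if "r \<in> {0<..<1}" for r
      using that by (intro le_less_trans[OF Lo_mono Lo_fin[of \<psi>, OF meas(2) \<phi>p(2) \<phi>b(2)]]) auto
    moreover have "0 < Lo \<psi> (i - 1) r" if "r \<in> {0<..<1}" for r
      using Lo_pos[of \<psi>, OF meas(2) \<phi>p(2) \<psi>m] that by auto
    moreover have "Lo \<phi> (i - 1) s * Lo \<psi> (i - 1) s' \<le> Lo \<phi> (i - 1) s' * Lo \<psi> (i - 1) s"
      using Lo_cross[of \<phi> \<psi>, OF meas(1) meas(2) \<phi>p pq] s by auto
    ultimately show "(LINT t : open_simplex 0 s 1 (i - 1) | leb_on 1 (i - 1). exp (xi_sum l x 1 (i - 1) t))
          / (LINT t : open_simplex 0 s 1 (i - 1) | leb_on 1 (i - 1). exp (lam * (\<Sum>j=1..i - 1. t j))) \<le>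
          (LINT t : open_simplex 0 s' 1 (i - 1) | leb_on 1 (i - 1). exp (xi_sum l x 1 (i - 1) t))
          / (LINT t : open_simplex 0 s' 1 (i - 1) | leb_on 1 (i - 1). exp (lam * (\<Sum>j=1..i - 1. t j)))"
      unfolding L2 using s by (subst (1 2) L1) (auto intro!: ratio)
  qed
  have m2: "mono_on {0<..<1} (\<lambda>s.
            (LINT t : open_simplex s 1 (i + 1) n | leb_on (i + 1) n. exp (xi_sum l x (i + 1) n t))
          / (LINT t : open_simplex s 1 (i + 1) n | leb_on (i + 1) n. exp (lam * (\<Sum>j=i + 1..n. t j))))"
  proof (rule mono_onI)
    fix s s' :: real assume s: "s \<in> {0<..<1}" "s' \<in> {0<..<1}" "s \<le> s'"
    have "Up \<phi> (i + 1) n s' < \<infinity>"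
      using s by (intro le_less_trans[OF Up_antimono Up_fin[of \<phi>, OF meas(1) \<phi>p(1) \<phi>b(1)]]) auto
    moreover have "Up \<psi> (i + 1) n r < \<infinity>" if "r \<in> {0<..<1}" for r
      using that by (intro le_less_trans[OF Up_antimono Up_fin[of \<psi>, OF meas(2) \<phi>p(2) \<phi>b(2)]]) auto
    moreover have "0 < Up \<psi> (i + 1) n r" if "r \<in> {0<..<1}" for r
      using Up_pos[of \<psi>, OF meas(2) \<phi>p(2) \<psi>m] that by auto
    moreover have "Up \<phi> (i + 1) n s * Up \<psi> (i + 1) n s' \<le> Up \<phi> (i + 1) n s' * Up \<psi> (i + 1) n s"
      using Up_cross[of \<phi> \<psi>, OF meas(1) meas(2) \<phi>p pq] s by auto
    ultimately show "(LINT t : open_simplex s 1 (i + 1) n | leb_on (i + 1) n. exp (xi_sum l x (i + 1) n t))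
          / (LINT t : open_simplex s 1 (i + 1) n | leb_on (i + 1) n. exp (lam * (\<Sum>j=i + 1..n. t j))) \<le>
          (LINT t : open_simplex s' 1 (i + 1) n | leb_on (i + 1) n. exp (xi_sum l x (i + 1) n t))
          / (LINT t : open_simplex s' 1 (i + 1) n | leb_on (i + 1) n. exp (lam * (\<Sum>j=i + 1..n. t j)))"
      unfolding U2 using s by (subst (1 2) U1) (auto intro!: ratio)
  qed
  show ?thesis using m1 m2 by blast
qed

end
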